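(* For every positive integer $k$, any deterministic distributed algorithm in the LOCAL model that finds a proper $4$-coloring of $G_k$ (for every assignment of unique identifiers to its vertices) requires at least $k=\frac{1}{8}(|V(G_k)|-2)$ rounds.
   Context: The planar graphs $G_k$ are defined inductively. $G_0$ has vertex set $\{v_{(0,1)},v_{(0,2)}\}$ and the single edge $\{v_{(0,1)},v_{(0,2)}\}$. For $i\ge 1$, $G_i$ is obtained from $G_{i-1}$ by adding, for each $j\in\{1,2\}$, four new vertices $a_{(i,j)},b_{(i,j)},c_{(i,j)},v_{(i,j)}$ and the edges $\{a_{(i,j)},b_{(i,j)}\},\{b_{(i,j)},c_{(i,j)}\},\{c_{(i,j)},a_{(i,j)}\}$, $\{a_{(i,j)},v_{(i,j)}\},\{b_{(i,j)},v_{(i,j)}\},\{c_{(i,j)},v_{(i,j)}\}$, $\{a_{(i,j)},v_{(i-1,j)}\},\{b_{(i,j)},v_{(i-1,j)}\},\{c_{(i,j)},v_{(i-1,j)}\}$. LOCAL model: the network is the graph, each vertex has a unique identifier, and in synchronous rounds each vertex receives the previous round's messages, computes arbitrarily and sends messages of unbounded size to its neighbors; at the end each vertex outputs its color. A proper $4$-coloring assigns colors in $\{1,2,3,4\}$ with adjacent vertices colored differently. *)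

theory Defs
  imports Complex_Main
begin

datatype vtx = Vx nat nat | Ax nat nat | Bx nat nat | Cx nat nat

primrec Gverts :: "nat \<Rightarrow> vtx set" where
  "Gverts 0 = {Vx 0 1, Vx 0 2}"
| "Gverts (Suc i) = Gverts i \<union>
     (\<Union>j\<in>{1,2}. {Ax (Suc i) j, Bx (Suc i) j, Cx (Suc i) j, Vx (Suc i) j})"

primrec Gedges :: "nat \<Rightarrow> vtx set set" where
  "Gedges 0 = {{Vx 0 1, Vx 0 2}}"
| "Gedges (Suc i) = Gedges i \<union>
     (\<Union>j\<in>{1,2}.
       {{Ax (Suc i) j, Bx (Suc i) j}, {Bx (Suc i) j, Cx (Suc i) j}, {Cx (Suc i) j, Ax (Suc i) j},
        {Ax (Suc i) j, Vx (Suc i) j}, {Bx (Suc i) j, Vx (Suc i) j}, {Cx (Suc i) j, Vx (Suc i) j},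
        {Ax (Suc i) j, Vx i j}, {Bx (Suc i) j, Vx i j}, {Cx (Suc i) j, Vx i j}})"

definition Gadj :: "nat \<Rightarrow> vtx \<Rightarrow> vtx \<Rightarrow> bool" where
  "Gadj k u v \<longleftrightarrow> {u, v} \<in> Gedges k"

text \<open>Synchronous execution of a deterministic LOCAL algorithm (full-information form).
  A node starts in state init (its identifier); in every round each node sends its
  current state (messages of unbounded size) to all neighbours, and then updates its
  state by an arbitrary function step of its own state and the set of received messages.
  run adj init step ident t v is the state of node v after t rounds.\<close>
primrec run :: "('v \<Rightarrow> 'v \<Rightarrow> bool) \<Rightarrow> (nat \<Rightarrow> 's) \<Rightarrow> ('s \<Rightarrow> 's set \<Rightarrow> 's)
                 \<Rightarrow> ('v \<Rightarrow> nat) \<Rightarrow> nat \<Rightarrow> 'v \<Rightarrow> 's" where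
  "run adj init step ident 0 v = init (ident v)"
| "run adj init step ident (Suc t) v =
     step (run adj init step ident t v) ((\<lambda>u. run adj init step ident t u) ` {u. adj u v})"

definition proper4 :: "'v set \<Rightarrow> 'v set set \<Rightarrow> ('v \<Rightarrow> nat) \<Rightarrow> bool" where
  "proper4 V E c \<longleftrightarrow> (\<forall>v\<in>V. c v \<in> {1..4}) \<and> (\<forall>u w. {u, w} \<in> E \<longrightarrow> c u \<noteq> c w)"

end

theory Submission
  imports Defs "HOL-Library.Countable"
begin

instance vtx :: countable by countable_datatype

definition sw :: "nat \<Rightarrow> nat" where
  "sw j = (if j = 1 then 2 else if j = 2 then 1 else j)"

fun sg :: "vtx \<Rightarrow> vtx" where
  "sg (Vx i j) = Vx i (sw j)"
| "sg (Ax i j) = Ax i (sw j)"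
| "sg (Bx i j) = Bx i (sw j)"
| "sg (Cx i j) = Cx i (sw j)"

fun side :: "vtx \<Rightarrow> nat" where
  "side (Vx i j) = j" | "side (Ax i j) = j" | "side (Bx i j) = j" | "side (Cx i j) = j"

fun hh :: "vtx \<Rightarrow> nat" where
  "hh (Vx i j) = 2*i" | "hh (Ax i j) = 2*i - 1" | "hh (Bx i j) = 2*i - 1" | "hh (Cx i j) = 2*i - 1"

fun lvl :: "vtx \<Rightarrow> nat" where
  "lvl (Vx i j) = i" | "lvl (Ax i j) = i" | "lvl (Bx i j) = i" | "lvl (Cx i j) = i"

lemma sg_sg[simp]: "sg (sg u) = u"
  by (cases u) (auto simp: sw_def)

lemma side_sg: "side (sg u) = sw (side u)"
  by (cases u) auto

definition FF :: "nat \<Rightarrow> nat \<Rightarrow> vtx set set" where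
  "FF i j = {{Ax (Suc i) j, Bx (Suc i) j}, {Bx (Suc i) j, Cx (Suc i) j}, {Cx (Suc i) j, Ax (Suc i) j},
        {Ax (Suc i) j, Vx (Suc i) j}, {Bx (Suc i) j, Vx (Suc i) j}, {Cx (Suc i) j, Vx (Suc i) j},
        {Ax (Suc i) j, Vx i j}, {Bx (Suc i) j, Vx i j}, {Cx (Suc i) j, Vx i j}}"

lemma Gedges_Suc: "Gedges (Suc i) = Gedges i \<union> (\<Union>j\<in>{1,2}. FF i j)"
  by (simp add: FF_def)

lemma FF_sg: "(image sg) ` FF i j = FF i (sw j)"
  by (simp add: FF_def)

lemma sg_edges: "e \<in> Gedges k \<Longrightarrow> sg ` e \<in> Gedges k"
proof (induction k arbitrary: e)
  case 0 then show ?case by (simp add: sw_def insert_commute)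
next
  case (Suc k)
  show ?case
  proof (cases "e \<in> Gedges k")
    case True then show ?thesis using Suc.IH by (simp add: Gedges_Suc)
  next
    case False
    then have "e \<in> (\<Union>j\<in>{1,2}. FF k j)" using Suc.prems unfolding Gedges_Suc by blast
    then obtain j where j: "j \<in> {1,2}" "e \<in> FF k j" by blast
    have "image sg e \<in> image (image sg) (FF k j)" by (rule imageI[OF j(2)])
    then have "sg ` e \<in> FF k (sw j)" unfolding FF_sg .
    moreover have "sw j \<in> {1,2}" using j by (auto simp: sw_def)
    ultimately show ?thesis unfolding Gedges_Suc by blast
  qed
qed

lemma sg_adj: "Gadj k (sg u) (sg v) = Gadj k u v"
proof
  assume "Gadj k (sg u) (sg v)"
  then have "sg ` {sg u, sg v} \<in> Gedges k" unfolding Gadj_def by (rule sg_edges)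
  then show "Gadj k u v" by (simp add: Gadj_def)
next
  assume "Gadj k u v"
  then have "sg ` {u, v} \<in> Gedges k" unfolding Gadj_def by (rule sg_edges)
  then show "Gadj k (sg u) (sg v)" by (simp add: Gadj_def)
qed

lemma run_sym:
  assumes inv: "\<And>u. s (s u) = u" and ad: "\<And>u v. adj (s u) (s v) = adj u v"
  shows "run adj init step (ident \<circ> s) t v = run adj init step ident t (s v)"
proof (induction t arbitrary: v)
  case 0 then show ?case by simp
next
  case (Suc t)
  have "s ` {u. adj u v} = {w. adj w (s v)}"
  proof
    show "s ` {u. adj u v} \<subseteq> {w. adj w (s v)}" using ad by auto
    show "{w. adj w (s v)} \<subseteq> s ` {u. adj u v}"
    proof
      fix w assume "w \<in> {w. adj w (s v)}"
      then have "adj (s (s w)) (s v)" using inv by simp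
      then have "adj (s w) v" using ad by simp
      then show "w \<in> s ` {u. adj u v}" using inv by (metis image_eqI mem_Collect_eq)
    qed
  qed
  then have "(\<lambda>u. run adj init step ident t (s u)) ` {u. adj u v}
      = (\<lambda>w. run adj init step ident t w) ` {w. adj w (s v)}"
    by (metis image_image)
  then show ?case using Suc by simp
qed

primrec ball :: "('v \<Rightarrow> 'v \<Rightarrow> bool) \<Rightarrow> nat \<Rightarrow> 'v \<Rightarrow> 'v set" where
  "ball adj 0 v = {v}"
| "ball adj (Suc t) v = ball adj t v \<union> (\<Union>u\<in>{u. adj u v}. ball adj t u)"

lemma run_local:
  "(\<forall>u\<in>ball adj t v. i1 u = i2 u) \<Longrightarrow> run adj init step i1 t v = run adj init step i2 t v"
proof (induction t arbitrary: v)
  case 0 then show ?case by simp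
next
  case (Suc t)
  have a: "run adj init step i1 t v = run adj init step i2 t v" using Suc by auto
  have b: "(\<lambda>u. run adj init step i1 t u) ` {u. adj u v} = (\<lambda>u. run adj init step i2 t u) ` {u. adj u v}"
    by (rule image_cong) (use Suc in auto)
  show ?case using a b by simp
qed

lemma edge_hh: "{w, v} \<in> Gedges k \<Longrightarrow> hh v \<ge> 1 \<Longrightarrow> side w = side v \<and> hh v \<le> hh w + 1"
  by (induction k) (auto simp: doubleton_eq_iff)

lemma ball_side:
  "u \<in> ball (Gadj k) t v \<Longrightarrow> hh v > t \<Longrightarrow> side u = side v \<and> hh u + t \<ge> hh v"
proof (induction t arbitrary: v u)
  case 0 then show ?case by simp
next
  case (Suc t)
  show ?case
  proof (cases "u \<in> ball (Gadj k) t v")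
    case True then show ?thesis using Suc.IH[of u v] Suc.prems by auto
  next
    case False
    then obtain w where w: "Gadj k w v" "u \<in> ball (Gadj k) t w" using Suc.prems by auto
    have e: "side w = side v \<and> hh v \<le> hh w + 1" using edge_hh w(1) Suc.prems unfolding Gadj_def by auto
    then have "hh w > t" using Suc.prems by auto
    then show ?thesis using Suc.IH[of u w] w e by auto
  qed
qed

lemma four: fixes x y a b c :: nat
  assumes "x \<in> {1..4}" "y \<in> {1..4}" "a \<in> {1..4}" "b \<in> {1..4}" "c \<in> {1..4}"
   "a \<noteq> b" "b \<noteq> c" "c \<noteq> a" "a \<noteq> x" "b \<noteq> x" "c \<noteq> x" "a \<noteq> y" "b \<noteq> y" "c \<noteq> y"
  shows "x = y"
proof -
  have e: "{1..4::nat} = {1,2,3,4}" by auto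
  show ?thesis using assms unfolding e by auto
qed

lemma Gverts_mono: "m \<le> k \<Longrightarrow> Gverts m \<subseteq> Gverts k"
proof (induction k)
  case 0 then show ?case by simp
next
  case (Suc k)
  have s: "Gverts k \<subseteq> Gverts (Suc k)" unfolding Gverts.simps(2) by (rule Un_upper1)
  show ?case
  proof (cases "m = Suc k")
    case True then show ?thesis by simp
  next
    case False then have "m \<le> k" using Suc.prems by simp
    then show ?thesis using Suc.IH s by (rule_tac subset_trans) 
  qed
qed

lemma Gedges_mono: "m \<le> k \<Longrightarrow> Gedges m \<subseteq> Gedges k"
proof (induction k)
  case 0 then show ?case by simp
next
  case (Suc k)
  have s: "Gedges k \<subseteq> Gedges (Suc k)" unfolding Gedges.simps(2) by (rule Un_upper1)
  show ?case
  proof (cases "m = Suc k")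
    case True then show ?thesis by simp
  next
    case False then have "m \<le> k" using Suc.prems by simp
    then show ?thesis using Suc.IH s by (rule_tac subset_trans) 
  qed
qed

lemma gadget:
  assumes "j \<in> {1,2::nat}"
  shows "{{Ax (Suc i) j, Bx (Suc i) j}, {Bx (Suc i) j, Cx (Suc i) j}, {Cx (Suc i) j, Ax (Suc i) j},
        {Ax (Suc i) j, Vx (Suc i) j}, {Bx (Suc i) j, Vx (Suc i) j}, {Cx (Suc i) j, Vx (Suc i) j},
        {Ax (Suc i) j, Vx i j}, {Bx (Suc i) j, Vx i j}, {Cx (Suc i) j, Vx i j}} \<subseteq> Gedges (Suc i)"
   and "{Ax (Suc i) j, Bx (Suc i) j, Cx (Suc i) j, Vx (Suc i) j} \<subseteq> Gverts (Suc i)"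
proof -
  show "{{Ax (Suc i) j, Bx (Suc i) j}, {Bx (Suc i) j, Cx (Suc i) j}, {Cx (Suc i) j, Ax (Suc i) j},
        {Ax (Suc i) j, Vx (Suc i) j}, {Bx (Suc i) j, Vx (Suc i) j}, {Cx (Suc i) j, Vx (Suc i) j},
        {Ax (Suc i) j, Vx i j}, {Bx (Suc i) j, Vx i j}, {Cx (Suc i) j, Vx i j}} \<subseteq> Gedges (Suc i)"
    unfolding Gedges.simps(2) by (rule Un_upper2[THEN subset_trans[rotated]], rule UN_upper[OF assms])
  show "{Ax (Suc i) j, Bx (Suc i) j, Cx (Suc i) j, Vx (Suc i) j} \<subseteq> Gverts (Suc i)"
    unfolding Gverts.simps(2) by (rule Un_upper2[THEN subset_trans[rotated]], rule UN_upper[OF assms])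
qed

lemma chain_step:
  assumes p: "proper4 (Gverts k) (Gedges k) c" and i: "i < k" and j: "j \<in> {1,2}"
  shows "c (Vx (Suc i) j) = c (Vx i j)"
proof -
  have S: "Suc i \<le> k" using i by simp
  have V: "Gverts (Suc i) \<subseteq> Gverts k" "Gedges (Suc i) \<subseteq> Gedges k"
    using Gverts_mono[OF S] Gedges_mono[OF S] by blast+
  note G1 = subset_trans[OF gadget(1)[OF j] V(2)]
  note G2 = subset_trans[OF gadget(2)[OF j] V(1)]
  have iV: "Vx i j \<in> Gverts k"
  proof -
    have "Vx i j \<in> Gverts i" using j by (cases i) auto
    then show ?thesis using Gverts_mono[of i k] i by auto
  qed
  have r: "\<forall>v\<in>Gverts k. c v \<in> {1..4}" and d: "\<forall>u w. {u, w} \<in> Gedges k \<longrightarrow> c u \<noteq> c w"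
    using p unfolding proper4_def by auto
  have ra: "c (Ax (Suc i) j) \<in> {1..4}" "c (Bx (Suc i) j) \<in> {1..4}" "c (Cx (Suc i) j) \<in> {1..4}"
     "c (Vx (Suc i) j) \<in> {1..4}" "c (Vx i j) \<in> {1..4}"
    using r G2 iV by (simp_all add: insert_subset)
  have E: "{Ax (Suc i) j, Bx (Suc i) j} \<in> Gedges k" "{Bx (Suc i) j, Cx (Suc i) j} \<in> Gedges k"
     "{Cx (Suc i) j, Ax (Suc i) j} \<in> Gedges k" "{Ax (Suc i) j, Vx (Suc i) j} \<in> Gedges k"
     "{Bx (Suc i) j, Vx (Suc i) j} \<in> Gedges k" "{Cx (Suc i) j, Vx (Suc i) j} \<in> Gedges k"
     "{Ax (Suc i) j, Vx i j} \<in> Gedges k" "{Bx (Suc i) j, Vx i j} \<in> Gedges k"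
     "{Cx (Suc i) j, Vx i j} \<in> Gedges k"
    using G1 unfolding insert_subset by blast+
  note dd = d[rule_format, OF E(1)] d[rule_format, OF E(2)] d[rule_format, OF E(3)]
     d[rule_format, OF E(4)] d[rule_format, OF E(5)] d[rule_format, OF E(6)]
     d[rule_format, OF E(7)] d[rule_format, OF E(8)] d[rule_format, OF E(9)]
  show ?thesis by (rule four[OF ra(4) ra(5) ra(1) ra(2) ra(3) dd])
qed

lemma chain_eq:
  assumes p: "proper4 (Gverts k) (Gedges k) c" and j: "j \<in> {1,2}"
  shows "i \<le> k \<Longrightarrow> c (Vx i j) = c (Vx 0 j)"
proof (induction i)
  case 0 then show ?case by simp
next
  case (Suc i)
  then have "i < k" by simp
  then have "c (Vx (Suc i) j) = c (Vx i j)" by (rule chain_step[OF p _ j])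
  then show ?case using Suc by simp
qed

lemma ends_differ:
  assumes p: "proper4 (Gverts k) (Gedges k) c"
  shows "c (Vx k 1) \<noteq> c (Vx k 2)"
proof -
  have "Gedges 0 \<subseteq> Gedges k" by (rule Gedges_mono) simp
  then have "{Vx 0 1, Vx 0 2} \<in> Gedges k" by simp
  then have "c (Vx 0 1) \<noteq> c (Vx 0 2)" using p unfolding proper4_def by blast
  moreover have "c (Vx k 1) = c (Vx 0 1)" by (rule chain_eq[OF p]) simp_all
  moreover have "c (Vx k 2) = c (Vx 0 2)" by (rule chain_eq[OF p]) simp_all
  ultimately show ?thesis by simp
qed

lemma Gverts_lvl: "u \<in> Gverts k \<Longrightarrow> lvl u \<le> k"
  by (induction k) auto

lemma Gverts_card: "finite (Gverts k) \<and> card (Gverts k) = 8 * k + 2"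
proof (induction k)
  case 0 then show ?case by simp
next
  case (Suc k)
  let ?N = "(\<Union>j\<in>{1::nat,2}. {Ax (Suc k) j, Bx (Suc k) j, Cx (Suc k) j, Vx (Suc k) j})"
  have N: "?N = {Ax (Suc k) 1, Bx (Suc k) 1, Cx (Suc k) 1, Vx (Suc k) 1,
                 Ax (Suc k) 2, Bx (Suc k) 2, Cx (Suc k) 2, Vx (Suc k) 2}" by auto
  have cN: "card ?N = 8" unfolding N by simp
  have dj: "Gverts k \<inter> ?N = {}"
  proof (rule ccontr)
    assume "Gverts k \<inter> ?N \<noteq> {}"
    then obtain u where "u \<in> Gverts k" "u \<in> ?N" by blast
    then show False using Gverts_lvl[of u k] unfolding N by auto
  qed
  have "card (Gverts (Suc k)) = card (Gverts k) + card ?N"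
    using Suc dj by (simp add: card_Un_disjoint)
  then show ?case using Suc cN by simp
qed

definition II :: "nat \<Rightarrow> nat \<Rightarrow> vtx \<Rightarrow> nat" where
  "II a b u = (if side u = 1 then 5 * to_nat u + a else 5 * to_nat (sg u) + b)"

definition JJ :: "nat \<Rightarrow> vtx \<Rightarrow> nat" where
  "JJ a u = 5 * to_nat (if side u = 1 then u else sg u) + a"

lemma II_inj:
  assumes "a < 5" "b < 5" "a \<noteq> b"
  shows "inj_on (II a b) S"
proof (rule inj_onI)
  fix x y assume e: "II a b x = II a b y"
  show "x = y"
  proof (cases "side x = 1"; cases "side y = 1")
    assume "side x = 1" "side y = 1" then show ?thesis using e by (simp add: II_def)
  next
    assume "side x \<noteq> 1" "side y \<noteq> 1"
    then have "sg x = sg y" using e by (simp add: II_def)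
    then show ?thesis by (metis sg_sg)
  next
    assume "side x = 1" "side y \<noteq> 1"
    then have "5 * to_nat x + a = 5 * to_nat (sg y) + b" using e by (simp add: II_def)
    then have "(5 * to_nat x + a) mod 5 = (5 * to_nat (sg y) + b) mod 5" by (rule arg_cong)
    then have "a mod 5 = b mod 5" by simp
    then show ?thesis using assms by simp
  next
    assume "side x \<noteq> 1" "side y = 1"
    then have "5 * to_nat (sg x) + b = 5 * to_nat y + a" using e by (simp add: II_def)
    then have "(5 * to_nat (sg x) + b) mod 5 = (5 * to_nat y + a) mod 5" by (rule arg_cong)
    then have "a mod 5 = b mod 5" by simp
    then show ?thesis using assms by simp
  qed
qed

lemma sg_fix: "side u \<noteq> 1 \<Longrightarrow> side u \<noteq> 2 \<Longrightarrow> sg u = u"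
  by (cases u) (auto simp: sw_def)

lemma JJ_sym: "JJ a \<circ> sg = JJ a"
proof
  fix u
  have "JJ a (sg u) = JJ a u"
  proof (cases "side u = 1")
    case True
    then have "side (sg u) = 2" by (simp add: side_sg sw_def)
    then show ?thesis using True by (simp add: JJ_def)
  next
    case F: False
    show ?thesis
    proof (cases "side u = 2")
      case True
      then have "side (sg u) = 1" by (simp add: side_sg sw_def)
      then show ?thesis using True by (simp add: JJ_def)
    next
      case False
      then show ?thesis using F by (simp add: sg_fix)
    qed
  qed
  then show "(JJ a \<circ> sg) u = JJ a u" by simp
qed

theorem lemma6p5:
  fixes k r :: nat
    and init :: "nat \<Rightarrow> 's"
    and step :: "'s \<Rightarrow> 's set \<Rightarrow> 's"
    and out :: "'s \<Rightarrow> nat"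
  assumes "k \<ge> 1"
    and "\<forall>ident. inj_on ident (Gverts k) \<longrightarrow>
           proper4 (Gverts k) (Gedges k) (\<lambda>v. out (run (Gadj k) init step ident r v))"
  shows "k \<le> r \<and> real k = (real (card (Gverts k)) - 2) / 8"
proof
  show "real k = (real (card (Gverts k)) - 2) / 8" using Gverts_card[of k] by simp
  show "k \<le> r"
  proof (rule ccontr)
    assume "\<not> k \<le> r"
    then have rk: "r < hh (Vx k 1)" "r < hh (Vx k 2)" by auto
    define col where "col a = out (run (Gadj k) init step (JJ a) r (Vx k 1))" for a
    have key: "out (run (Gadj k) init step (II a b) r (Vx k 1)) = col a \<and>
               out (run (Gadj k) init step (II a b) r (Vx k 2)) = col b" for a b
    proof
      have "run (Gadj k) init step (II a b) r (Vx k 1) = run (Gadj k) init step (JJ a) r (Vx k 1)"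
      proof (rule run_local, rule ballI)
        fix u assume "u \<in> ball (Gadj k) r (Vx k 1)"
        then have "side u = 1" using ball_side[OF _ rk(1)] by simp
        then show "II a b u = JJ a u" by (simp add: II_def JJ_def)
      qed
      then show "out (run (Gadj k) init step (II a b) r (Vx k 1)) = col a" by (simp add: col_def)
      have "run (Gadj k) init step (II a b) r (Vx k 2) = run (Gadj k) init step (JJ b) r (Vx k 2)"
      proof (rule run_local, rule ballI)
        fix u assume "u \<in> ball (Gadj k) r (Vx k 2)"
        then have "side u = 2" using ball_side[OF _ rk(2)] by simp
        then show "II a b u = JJ b u" by (simp add: II_def JJ_def)
      qed
      also have "\<dots> = run (Gadj k) init step (JJ b \<circ> sg) r (Vx k 2)" by (simp add: JJ_sym)
      also have "\<dots> = run (Gadj k) init step (JJ b) r (sg (Vx k 2))"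
        by (rule run_sym) (auto simp: sg_adj)
      also have "sg (Vx k 2) = Vx k 1" by (simp add: sw_def)
      finally show "out (run (Gadj k) init step (II a b) r (Vx k 2)) = col b" by (simp add: col_def)
    qed
    have P: "proper4 (Gverts k) (Gedges k) (\<lambda>v. out (run (Gadj k) init step (II a b) r v))"
      if "a < 5" "b < 5" "a \<noteq> b" for a b
      using assms(2) II_inj[OF that] by blast
    have neq: "col a \<noteq> col b" if "a < 5" "b < 5" "a \<noteq> b" for a b
      using ends_differ[OF P[OF that]] key[of a b] by simp
    have v1: "Vx k 1 \<in> Gverts k" using Gverts_mono[of 0 k] by (cases k) auto
    have rng: "col a \<in> {1..4}" if "a < 5" for a
    proof -
      define b where "b = (if a = 0 then 1 else 0::nat)"
      have "b < 5" "a \<noteq> b" by (auto simp: b_def)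
      then show ?thesis using P[OF that \<open>b < 5\<close> \<open>a \<noteq> b\<close>] key[of a b] v1
        unfolding proper4_def by auto
    qed
    have "inj_on col {..<5}" using neq by (auto intro: inj_onI)
    moreover have "col ` {..<5} \<subseteq> {1..4}" using rng by auto
    ultimately have "card {..<5::nat} \<le> card {1..4::nat}" by (rule card_inj_on_le) simp
    then show False by simp
  qed
qed

end
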